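(* Let $A\in\mathbb{R}^{n_x\times n_x}$, $B\in\mathbb{R}^{n_x\times n_u}$, and let $Q\in\mathbb{R}^{n_x\times n_x}$, $R\in\mathbb{R}^{n_u\times n_u}$ be symmetric positive definite, with $(A,B)$ stabilizable. Let $\mathcal{K}=\{K\in\mathbb{R}^{n_u\times n_x}:\rho(A-BK)<1\}$ and for $K\in\mathcal{K}$ let $$J(K)=\sup_{\omega\in[0,2\pi]}\lambda_{\max}^{1/2}\Big((e^{-j\omega}I-A+BK)^{-\mathsf{T}}(Q+K^{\mathsf{T}}RK)(e^{j\omega}I-A+BK)^{-1}\Big).$$ Then $J$ is coercive over $\mathcal{K}$ in the following sense: for any sequence $\{K^l\}_{l=1}^\infty\subset\mathcal{K}$, we have $J(K^l)\to+\infty$ if either $\|K^l\|_F\to+\infty$, or $K^l$ converges to a point of the boundary $\partial\mathcal{K}$.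
   Context: $\rho(\cdot)$ denotes spectral radius, $j=\sqrt{-1}$, $\lambda_{\max}$ the largest eigenvalue of a Hermitian matrix, and $\|\cdot\|_F$ the Frobenius norm. $J(K)$ is the $\mathcal{H}_\infty$ norm (equivalently the $\ell_2\to\ell_2$ induced norm from $\{w_t\}$ to $\{(Q+K^{\mathsf T}RK)^{1/2}x_t\}$) of the closed-loop system $x_{t+1}=(A-BK)x_t+w_t$, $x_0=0$. The boundary $\partial\mathcal{K}$ is taken in $\mathbb{R}^{n_u\times n_x}$. *)

theory Defs
  imports "HOL-Analysis.Analysis"
begin

definition cmat :: "real^'n^'m \<Rightarrow> complex^'n^'m" where
  "cmat M = (\<chi> i j. complex_of_real (M $ i $ j))"

definition is_eigenvalue :: "complex^'n^'n \<Rightarrow> complex \<Rightarrow> bool" where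
  "is_eigenvalue M c \<longleftrightarrow> (\<exists>v. v \<noteq> 0 \<and> M *v v = c *s v)"

definition spec_rad :: "real^'n^'n \<Rightarrow> real" where
  "spec_rad M = Max (norm ` {c. is_eigenvalue (cmat M) c})"

text \<open>Largest eigenvalue of a Hermitian matrix (whose eigenvalues are real).\<close>
definition lambda_max :: "complex^'n^'n \<Rightarrow> real" where
  "lambda_max H = Max {x::real. is_eigenvalue H (complex_of_real x)}"

definition sym_pd :: "real^'n^'n \<Rightarrow> bool" where
  "sym_pd M \<longleftrightarrow> transpose M = M \<and> (\<forall>x. x \<noteq> 0 \<longrightarrow> x \<bullet> (M *v x) > 0)"

definition stabilizable :: "real^'nx^'nx \<Rightarrow> real^'nu^'nx \<Rightarrow> bool" where
  "stabilizable A B \<longleftrightarrow> (\<exists>K::real^'nx^'nu. spec_rad (A - B ** K) < 1)"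

definition stab_set :: "real^'nx^'nx \<Rightarrow> real^'nu^'nx \<Rightarrow> (real^'nx^'nu) set" where
  "stab_set A B = {K. spec_rad (A - B ** K) < 1}"

definition Jcost :: "real^'nx^'nx \<Rightarrow> real^'nu^'nx \<Rightarrow> real^'nx^'nx \<Rightarrow> real^'nu^'nu
                      \<Rightarrow> real^'nx^'nu \<Rightarrow> real" where
  "Jcost A B Q R K =
     (SUP \<omega>\<in>{0..2*pi}.
        sqrt (lambda_max
          (transpose (matrix_inv (mat (cis (-\<omega>)) - cmat A + cmat (B ** K)))
           ** cmat (Q + transpose K ** R ** K)
           ** matrix_inv (mat (cis \<omega>) - cmat A + cmat (B ** K)))))"

end

theory Submission
  imports Defs "HOL-Complex_Analysis.Complex_Analysis" "HOL-Computational_Algebra.Fundamental_Theorem_Algebra"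
begin

no_notation fps_nth (infixl \<open>$\<close> 75)

lemma holo_det:
  assumes "\<And>i j. (\<lambda>z. ((F z) $ i) $ j) holomorphic_on U"
  shows "(\<lambda>z. det (F z :: complex^'n^'n)) holomorphic_on U"
  unfolding det_def
  by (intro holomorphic_intros assms)

lemma mat_mult_vec: "mat c *v v = c *s (v::'a::comm_semiring_1^'n)"
proof -
  have "(\<Sum>j\<in>UNIV. (if i = j then c else 0) * v $ j) = c * v $ i" for i
  proof -
    have "(\<Sum>j\<in>UNIV. (if i = j then c else 0) * v $ j) = (\<Sum>j\<in>UNIV. if j = i then c * v$j else 0)"
      by (rule sum.cong) auto
    then show ?thesis by simp
  qed
  then show ?thesis by (simp add: vec_eq_iff matrix_vector_mult_def mat_def)
qed

lemma eig_iff_det: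
  fixes M :: "'a::field^'n^'n"
  shows "(\<exists>v. v \<noteq> 0 \<and> M *v v = c *s v) \<longleftrightarrow> det (mat c - M) = 0"
proof -
  have "(\<exists>v. v \<noteq> 0 \<and> M *v v = c *s v) \<longleftrightarrow> (\<exists>v. v \<noteq> 0 \<and> (mat c - M) *v v = 0)"
    unfolding matrix_vector_mult_diff_rdistrib mat_mult_vec by (metis right_minus_eq)
  also have "\<dots> \<longleftrightarrow> \<not> invertible (mat c - M)"
    unfolding invertible_left_inverse matrix_left_invertible_ker by blast
  also have "\<dots> \<longleftrightarrow> det (mat c - M) = 0"
    by (simp add: invertible_det_nz)
  finally show ?thesis .
qed

definition cpoly :: "complex^'n^'n \<Rightarrow> complex poly" where
  "cpoly M = det (\<chi> i j. (if i = j then [:0,1:] else 0) - [:M$i$j:])"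

lemma poly_cpoly: "poly (cpoly M) z = det (mat z - M)"
  unfolding cpoly_def det_def
  by (auto simp add: poly_sum poly_prod mat_def of_int_poly intro!: sum.cong prod.cong)

lemma mat_mult_mat: "mat c ** X = (\<chi> i j. c * X$i$j)" for X :: "'a::comm_semiring_1^'m^'n"
proof -
  have "(\<Sum>k\<in>UNIV. (if i = k then c else 0) * X $ k $ j) = c * X $ i $ j" for i j
  proof -
    have "(\<Sum>k\<in>UNIV. (if i = k then c else 0) * X $ k $ j) = (\<Sum>k\<in>UNIV. if k = i then c * X $ k $ j else 0)"
      by (rule sum.cong) auto
    then show ?thesis by simp
  qed
  then show ?thesis by (simp add: vec_eq_iff matrix_matrix_mult_def mat_def)
qed

lemma det_mat_scal: "det (mat c :: 'a::comm_ring_1^'n^'n) = c ^ CARD('n)"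
  by (subst det_diagonal) (auto simp: mat_def)

lemma det_scale:
  fixes M :: "complex^'n^'n"
  assumes "z \<noteq> 0"
  shows "det (mat z - M) = z ^ CARD('n) * det (\<chi> i j. (if i = j then 1 else 0) - M$i$j / z)"
proof -
  have "mat z - M = mat z ** (\<chi> i j. (if i = j then 1 else 0) - M$i$j / z)"
    using assms by (simp only: mat_mult_mat) (auto simp: vec_eq_iff mat_def right_diff_distrib)
  then show ?thesis by (simp add: det_mul det_mat_scal)
qed

lemma cpoly_nonconst: "\<not> constant (poly (cpoly (M :: complex^'n^'n)))"
proof
  assume c: "constant (poly (cpoly M))"
  define d where "d = det (mat 0 - M)"
  have hd: "det (mat z - M) = d" for z
    using c unfolding constant_def d_def poly_cpoly[symmetric] by metis
  define g where "g t = det (\<chi> i j. (if i = j then 1 else 0) - t * M$i$j)" for t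
  have "g holomorphic_on UNIV"
    unfolding g_def by (rule holo_det) (auto intro!: holomorphic_intros)
  then have "isCont g 0"
    by (meson UNIV_I holomorphic_on_imp_continuous_on continuous_on_eq_continuous_at open_UNIV)
  then have l1: "(g \<longlongrightarrow> g 0) (at 0)" by (simp add: isCont_def)
  have g0: "g 0 = 1"
  proof -
    have "(\<chi> i j. (if i = j then 1 else 0) - 0 * M$i$j) = (mat 1 :: complex^'n^'n)"
      by (simp add: vec_eq_iff mat_def)
    then show ?thesis unfolding g_def by simp
  qed
  have evp: "t ^ CARD('n) * d = g t" if t: "t \<noteq> 0" for t
  proof -
    have "d = (1/t) ^ CARD('n) * det (\<chi> i j. (if i = j then 1 else 0) - M$i$j / (1/t))"
      using det_scale[of "1/t" M] hd[of "1/t"] t by simp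
    also have "(\<chi> i j. (if i = j then 1 else 0) - M$i$j / (1/t)) = (\<chi> i j. (if i = j then 1 else 0) - t * M$i$j)"
      by (simp add: vec_eq_iff)
    finally have "d = (1/t) ^ CARD('n) * g t" unfolding g_def .
    then show "t ^ CARD('n) * d = g t" using t by (simp add: power_one_over)
  qed
  have "eventually (\<lambda>t::complex. t \<noteq> 0) (at 0)" by (simp add: eventually_at_filter)
  then have ev: "\<forall>\<^sub>F t in at 0. t ^ CARD('n) * d = g t"
    by (rule eventually_mono) (rule evp)
  have "((\<lambda>t. t ^ CARD('n) * d) \<longlongrightarrow> 0 ^ CARD('n) * d) (at (0::complex))"
    by (intro tendsto_intros)
  moreover have "CARD('n) \<noteq> 0" by simp
  ultimately have "((\<lambda>t. t ^ CARD('n) * d) \<longlongrightarrow> 0) (at (0::complex))" by (simp add: power_0_left)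
  then have "(g \<longlongrightarrow> 0) (at 0)" using ev by (rule Lim_transform_eventually)
  with l1 g0 show False using tendsto_unique[OF at_neq_bot] by fastforce
qed

lemma eig_set_poly: "{c. is_eigenvalue M c} = {c. poly (cpoly M) c = 0}"
  unfolding is_eigenvalue_def eig_iff_det poly_cpoly by simp

lemma eig_finite: "finite {c. is_eigenvalue (M::complex^'n^'n) c}"
proof -
  have "cpoly M \<noteq> 0" using cpoly_nonconst[of M] by (auto simp: constant_def)
  then show ?thesis unfolding eig_set_poly by (rule poly_roots_finite)
qed

lemma eig_nonempty: "{c. is_eigenvalue (M::complex^'n^'n) c} \<noteq> {}"
  using fundamental_theorem_of_algebra[OF cpoly_nonconst[of M]] unfolding eig_set_poly by auto

lemma spec_rad_lt1: "spec_rad N < 1 \<longleftrightarrow> (\<forall>c. is_eigenvalue (cmat N) c \<longrightarrow> cmod c < 1)"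
  unfolding spec_rad_def
  using eig_finite[of "cmat N"] eig_nonempty[of "cmat N"]
  by (subst Max_less_iff) auto


definition cinner :: "complex^'n \<Rightarrow> complex^'n \<Rightarrow> complex" where
  "cinner u v = (\<Sum>i\<in>UNIV. cnj (u$i) * v$i)"

definition adj :: "complex^'n^'m \<Rightarrow> complex^'m^'n" where
  "adj A = (\<chi> i j. cnj (A$j$i))"

lemma cinner_add_right: "cinner u (v + w) = cinner u v + cinner u w"
  by (simp add: cinner_def distrib_left sum.distrib)
lemma cinner_add_left: "cinner (u + v) w = cinner u w + cinner v w"
  by (simp add: cinner_def distrib_right sum.distrib)
lemma cinner_diff_right: "cinner u (v - w) = cinner u v - cinner u w"
  by (simp add: cinner_def right_diff_distrib sum_subtractf)
lemma cinner_diff_left: "cinner (u - v) w = cinner u w - cinner v w"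
  by (simp add: cinner_def left_diff_distrib sum_subtractf)
lemma cinner_scale_right: "cinner u (c *s v) = c * cinner u v"
  by (simp add: cinner_def sum_distrib_left algebra_simps)
lemma cinner_scale_left: "cinner (c *s u) v = cnj c * cinner u v"
  by (simp add: cinner_def sum_distrib_left algebra_simps)
lemma cinner_scaleR_right: "cinner u (c *\<^sub>R v) = of_real c * cinner u v"
  by (simp add: cinner_def) (simp add: scaleR_conv_of_real sum_distrib_left algebra_simps)
lemma cinner_scaleR_left: "cinner (c *\<^sub>R u) v = of_real c * cinner u v"
  by (simp add: cinner_def) (simp add: scaleR_conv_of_real sum_distrib_left algebra_simps)
lemma cinner_zero_left[simp]: "cinner 0 v = 0" by (simp add: cinner_def)
lemma cinner_zero_right[simp]: "cinner u 0 = 0" by (simp add: cinner_def)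
lemma cinner_cnj: "cnj (cinner u v) = cinner v u"
  by (simp add: cinner_def mult.commute)

lemma normsq_vec: "(norm (x :: 'a::real_normed_vector^'n))^2 = (\<Sum>i\<in>UNIV. (norm (x$i))^2)"
  unfolding norm_vec_def L2_set_def by (simp add: sum_nonneg)

lemma cinner_self: "cinner x x = of_real ((norm x)^2)"
proof -
  have "cinner x x = (\<Sum>i\<in>UNIV. of_real ((cmod (x$i))^2))"
    unfolding cinner_def by (intro sum.cong refl) (simp only: complex_norm_square mult.commute)
  also have "\<dots> = of_real ((norm x)^2)" by (simp add: normsq_vec)
  finally show ?thesis .
qed

lemma Re_cinner_self: "Re (cinner x x) = (norm x)^2"
  by (simp add: cinner_self)

lemma cinner_self_eq_0: "cinner x x = 0 \<longleftrightarrow> x = 0"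
  by (simp add: cinner_self)

lemma norm_cinner: "cmod (cinner u v) \<le> norm u * norm v"
proof -
  have "cmod (cinner u v) \<le> (\<Sum>i\<in>UNIV. cmod (cnj (u$i) * v$i))"
    unfolding cinner_def by (rule norm_sum)
  also have "\<dots> = (\<Sum>i\<in>UNIV. \<bar>cmod (u$i)\<bar> * \<bar>cmod (v$i)\<bar>)"
    by (simp add: norm_mult)
  also have "\<dots> \<le> L2_set (\<lambda>i. cmod (u$i)) UNIV * L2_set (\<lambda>i. cmod (v$i)) UNIV"
    by (rule L2_set_mult_ineq)
  also have "\<dots> = norm u * norm v" by (simp add: norm_vec_def)
  finally show ?thesis .
qed

lemma cinner_adj: "cinner u (A *v v) = cinner (adj A *v u) v"
proof -
  have "cinner u (A *v v) = (\<Sum>i\<in>UNIV. \<Sum>j\<in>UNIV. cnj (u$i) * A$i$j * v$j)"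
    by (simp add: cinner_def matrix_vector_mult_def sum_distrib_left mult.assoc)
  also have "\<dots> = (\<Sum>j\<in>UNIV. \<Sum>i\<in>UNIV. cnj (u$i) * A$i$j * v$j)"
    by (rule sum.swap)
  also have "\<dots> = cinner (adj A *v u) v"
    by (simp add: cinner_def adj_def matrix_vector_mult_def sum_distrib_right sum_distrib_left cnj_sum mult_ac)
  finally show ?thesis .
qed

lemma mv_scaleR: "(A::complex^'n^'m) *v (c *\<^sub>R x) = c *\<^sub>R (A *v x)"
  by (simp add: vec_eq_iff matrix_vector_mult_def scaleR_sum_right)

lemma quad_lemma:
  fixes a b :: real
  assumes "\<And>t. 0 \<le> 2*t*a + t^2*b"
  shows "a = 0"
proof (rule ccontr)
  assume a: "a \<noteq> 0"
  define s where "s = \<bar>b\<bar> + 1"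
  have s: "s > 0" by (simp add: s_def add_pos_nonneg)
  define t where "t = - a / s"
  have "2*t*a + t^2*b = a^2 * (b - 2 * s) / s^2"
    using s by (simp add: t_def field_simps power2_eq_square)
  also have "\<dots> < 0"
    using a s by (intro divide_neg_pos mult_pos_neg) (auto simp: s_def)
  finally show False using assms[of t] by simp
qed

lemma cont_quadform: "continuous_on UNIV (\<lambda>v. Re (cinner v (H *v v)))"
  unfolding cinner_def matrix_vector_mult_def
  by (intro continuous_intros)


lemma herm_lmax:
  fixes H :: "complex^'n^'n"
  assumes herm: "\<And>u v. cinner u (H *v v) = cnj (cinner v (H *v u))"
  shows "\<And>v. Re (cinner v (H *v v)) \<le> lambda_max H * (norm v)^2"
    and "\<exists>v. norm v = 1 \<and> lambda_max H = Re (cinner v (H *v v))"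
proof -
  define f where "f v = Re (cinner v (H *v v))" for v
  have cont: "continuous_on (sphere 0 1) f"
    unfolding f_def by (rule continuous_on_subset[OF cont_quadform]) simp
  have ne: "sphere (0::complex^'n) 1 \<noteq> {}"
    by simp
  obtain v0 where v0: "v0 \<in> sphere 0 1" and v0max: "\<And>y. y \<in> sphere 0 1 \<Longrightarrow> f y \<le> f v0"
    using continuous_attains_sup[OF compact_sphere ne cont] by blast
  define m where "m = f v0"
  have nv0: "norm v0 = 1" using v0 by simp
  have fscale: "f (c *\<^sub>R v) = c^2 * f v" for c v
    unfolding f_def by (simp add: mv_scaleR cinner_scaleR_left cinner_scaleR_right power2_eq_square)
  have fbound: "f v \<le> m * (norm v)^2" for v
  proof (cases "v = 0")
    case True then show ?thesis by (simp add: f_def)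
  next
    case False
    then have nv: "norm v > 0" by simp
    let ?u = "(1 / norm v) *\<^sub>R v"
    have "?u \<in> sphere 0 1" using nv by simp
    then have "f ?u \<le> m" using v0max m_def by blast
    then have "(1 / norm v)^2 * f v \<le> m" by (simp add: fscale)
    then show ?thesis using nv by (simp add: field_simps)
  qed
  define G where "G = mat (complex_of_real m) - H"
  have Gv: "G *v x = complex_of_real m *s x - H *v x" for x
    unfolding G_def by (simp add: matrix_vector_mult_diff_rdistrib mat_mult_vec)
  have Gherm: "cinner u (G *v v) = cnj (cinner v (G *v u))" for u v
    unfolding Gv cinner_diff_right cinner_scale_right
    by (simp add: herm[of u v] cinner_cnj)
  have Gpos: "0 \<le> Re (cinner x (G *v x))" for x
    using fbound[of x] unfolding Gv cinner_diff_right cinner_scale_right f_def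
    by (simp add: cinner_self)
  have G0: "Re (cinner v0 (G *v v0)) = 0"
    unfolding Gv cinner_diff_right cinner_scale_right using nv0
    by (simp add: cinner_self m_def f_def)
  have a0: "Re (cinner w (G *v v0)) = 0" for w
  proof (rule quad_lemma)
    fix t :: real
    have "0 \<le> Re (cinner (v0 + t *\<^sub>R w) (G *v (v0 + t *\<^sub>R w)))" by (rule Gpos)
    also have "G *v (v0 + t *\<^sub>R w) = G *v v0 + t *\<^sub>R (G *v w)"
      by (simp add: matrix_vector_right_distrib mv_scaleR)
    also have "cinner (v0 + t *\<^sub>R w) (G *v v0 + t *\<^sub>R (G *v w)) =
        (cinner v0 (G *v v0) + of_real t * cinner w (G *v v0)) +
        of_real t * (cinner v0 (G *v w) + of_real t * cinner w (G *v w))"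
      by (simp only: cinner_add_left cinner_add_right cinner_scaleR_left cinner_scaleR_right)
    also have "Re \<dots> = Re (cinner v0 (G *v v0)) + t * (Re (cinner v0 (G *v w)) + Re (cinner w (G *v v0)))
        + t^2 * Re (cinner w (G *v w))"
      by (simp add: power2_eq_square distrib_left)
    also have "Re (cinner v0 (G *v w)) = Re (cinner w (G *v v0))"
      by (simp add: Gherm[of v0 w])
    finally show "0 \<le> 2 * t * Re (cinner w (G *v v0)) + t^2 * Re (cinner w (G *v w))"
      using G0 by simp
  qed
  have "Re (cinner (G *v v0) (G *v v0)) = 0" by (rule a0)
  then have "G *v v0 = 0" by (simp add: Re_cinner_self)
  then have Hv0: "H *v v0 = complex_of_real m *s v0" unfolding Gv by simp
  define E where "E = {x::real. is_eigenvalue H (complex_of_real x)}"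
  have finE: "finite E"
  proof -
    have "E = complex_of_real -` {c. is_eigenvalue H c}" by (auto simp: E_def)
    moreover have "finite (complex_of_real -` {c. is_eigenvalue H c})"
      by (rule finite_vimageI[OF eig_finite]) (simp add: inj_on_def)
    ultimately show ?thesis by simp
  qed
  have "v0 \<noteq> 0" using nv0 by auto
  then have mE: "m \<in> E" unfolding E_def is_eigenvalue_def mem_Collect_eq using Hv0 by blast
  have Ele: "x \<le> m" if "x \<in> E" for x
  proof -
    have "is_eigenvalue H (complex_of_real x)" using that by (simp add: E_def)
    then obtain u where u: "u \<noteq> 0" "H *v u = complex_of_real x *s u"
      unfolding is_eigenvalue_def by blast
    have "f u = x * (norm u)^2" unfolding f_def u(2) cinner_scale_right by (simp add: cinner_self)
    with fbound[of u] have "x * (norm u)^2 \<le> m * (norm u)^2" by simp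
    moreover have "(norm u)^2 > 0" using u(1) by simp
    ultimately show ?thesis by (rule mult_right_le_imp_le)
  qed
  have lm: "lambda_max H = m"
    unfolding lambda_max_def E_def[symmetric] using finE mE Ele by (intro Max_eqI) auto
  show "\<And>v. Re (cinner v (H *v v)) \<le> lambda_max H * (norm v)^2"
    using fbound unfolding lm f_def by simp
  show "\<exists>v. norm v = 1 \<and> lambda_max H = Re (cinner v (H *v v))"
  proof (intro exI conjI)
    show "norm v0 = 1" by (rule nv0)
    show "lambda_max H = Re (cinner v0 (H *v v0))" unfolding lm m_def f_def ..
  qed
qed


definition rv :: "complex^'n \<Rightarrow> real^'n" where "rv x = (\<chi> i. Re (x$i))"
definition iv :: "complex^'n \<Rightarrow> real^'n" where "iv x = (\<chi> i. Im (x$i))"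

lemma Re_cinner: "Re (cinner x y) = rv x \<bullet> rv y + iv x \<bullet> iv y"
  by (simp add: cinner_def rv_def iv_def inner_vec_def Re_sum sum.distrib)

lemma rv_cmat: "rv (cmat S *v x) = S *v rv x"
  by (simp add: rv_def cmat_def matrix_vector_mult_def vec_eq_iff Re_sum)

lemma iv_cmat: "iv (cmat S *v x) = S *v iv x"
  by (simp add: iv_def cmat_def matrix_vector_mult_def vec_eq_iff Im_sum)

lemma normsq_rv_iv: "(norm x)^2 = (norm (rv x))^2 + (norm (iv x))^2"
  by (simp add: normsq_vec rv_def iv_def cmod_power2 sum.distrib)

lemma cmat_diff: "cmat (X - Y) = cmat X - cmat Y"
  by (simp add: cmat_def vec_eq_iff)
lemma cmat_add: "cmat (X + Y) = cmat X + cmat Y"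
  by (simp add: cmat_def vec_eq_iff)
lemma cmat_mult: "cmat (X ** Y) = cmat X ** cmat Y"
  by (simp add: cmat_def vec_eq_iff matrix_matrix_mult_def)
lemma adj_cmat: "adj (cmat X) = cmat (transpose X)"
  by (simp add: adj_def cmat_def vec_eq_iff transpose_def)

lemma transpose_add: "transpose (X + Y) = transpose X + transpose (Y :: 'a::semiring_1^'n^'m)"
  by (simp add: transpose_def vec_eq_iff)

lemma pd_const:
  assumes "sym_pd Q"
  shows "\<exists>q>0. \<forall>a. q * (norm a)^2 \<le> a \<bullet> (Q *v a)"
proof -
  define f where "f a = a \<bullet> (Q *v a)" for a
  have cont: "continuous_on (sphere 0 1) f"
    unfolding f_def matrix_vector_mult_def inner_vec_def by (intro continuous_intros)
  have ne: "sphere (0::real^'n) 1 \<noteq> {}" by simp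
  obtain a0 where a0: "a0 \<in> sphere 0 1" and amin: "\<And>y. y \<in> sphere 0 1 \<Longrightarrow> f a0 \<le> f y"
    using continuous_attains_inf[OF compact_sphere ne cont] by blast
  have "a0 \<noteq> 0" using a0 by auto
  then have q: "f a0 > 0" using assms unfolding sym_pd_def f_def by blast
  have fscale: "f (c *\<^sub>R v) = c^2 * f v" for c v
    unfolding f_def by (simp add: matrix_vector_mult_scaleR power2_eq_square)
  have "f a0 * (norm a)^2 \<le> f a" for a
  proof (cases "a = 0")
    case True then show ?thesis by (simp add: f_def)
  next
    case False
    then have nv: "norm a > 0" by simp
    let ?u = "(1 / norm a) *\<^sub>R a"
    have "?u \<in> sphere 0 1" using nv by simp
    then have "f a0 \<le> f ?u" using amin by blast
    then have "f a0 \<le> (1 / norm a)^2 * f a" by (simp add: fscale)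
    then show ?thesis using nv by (simp add: field_simps)
  qed
  then show ?thesis using q unfolding f_def by blast
qed

lemma W_quad:
  fixes Q :: "real^'n^'n" and R :: "real^'m^'m" and K :: "real^'n^'m"
  shows "a \<bullet> ((Q + transpose K ** R ** K) *v a) = a \<bullet> (Q *v a) + (K *v a) \<bullet> (R *v (K *v a))"
proof -
  have "(Q + transpose K ** R ** K) *v a = Q *v a + transpose K *v (R *v (K *v a))"
    by (simp add: matrix_vector_mult_add_rdistrib matrix_vector_mul_assoc matrix_mul_assoc)
  moreover have "a \<bullet> (transpose K *v b) = (K *v a) \<bullet> b" for b
    unfolding transpose_matrix_vector by (metis dot_lmul_matrix inner_commute)
  ultimately show ?thesis by (simp add: inner_add_right)
qed

lemma W_lower:
  fixes Q :: "real^'n^'n" and R :: "real^'m^'m" and K :: "real^'n^'m"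
  assumes q: "\<forall>a. q * (norm a)^2 \<le> a \<bullet> (Q *v a)" and r: "\<forall>b. r * (norm b)^2 \<le> b \<bullet> (R *v b)"
  shows "q * (norm x)^2 + r * (norm (cmat K *v x))^2 \<le> Re (cinner x (cmat (Q + transpose K ** R ** K) *v x))"
proof -
  have e1: "Re (cinner x (cmat (Q + transpose K ** R ** K) *v x)) =
    (rv x \<bullet> (Q *v rv x) + (K *v rv x) \<bullet> (R *v (K *v rv x))) + (iv x \<bullet> (Q *v iv x) + (K *v iv x) \<bullet> (R *v (K *v iv x)))"
    unfolding Re_cinner rv_cmat iv_cmat W_quad by (rule refl)
  have e2: "(norm x)^2 = (norm (rv x))^2 + (norm (iv x))^2" by (rule normsq_rv_iv)
  have e3: "(norm (cmat K *v x))^2 = (norm (K *v rv x))^2 + (norm (K *v iv x))^2"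
    unfolding normsq_rv_iv[of "cmat K *v x"] rv_cmat iv_cmat by (rule refl)
  show ?thesis
    unfolding e1 e2 e3 distrib_left
    using q[rule_format, of "rv x"] q[rule_format, of "iv x"]
      r[rule_format, of "K *v rv x"] r[rule_format, of "K *v iv x"]
    by linarith
qed

definition m1 :: "complex^'n^'m \<Rightarrow> real" where
  "m1 L = (\<Sum>i\<in>UNIV. \<Sum>j\<in>UNIV. cmod (L$i$j))"

lemma norm_mv_le: "norm (L *v x) \<le> m1 L * norm x"
proof -
  have "norm (L *v x) \<le> (\<Sum>i\<in>UNIV. cmod ((L *v x)$i))"
    unfolding norm_vec_def by (rule L2_set_le_sum) simp
  also have "\<dots> \<le> (\<Sum>i\<in>UNIV. \<Sum>j\<in>UNIV. cmod (L$i$j) * norm x)"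
  proof (rule sum_mono)
    fix i
    have "cmod ((L *v x)$i) \<le> (\<Sum>j\<in>UNIV. cmod (L$i$j * x$j))"
      unfolding matrix_vector_mult_def vec_lambda_beta by (rule norm_sum)
    also have "\<dots> \<le> (\<Sum>j\<in>UNIV. cmod (L$i$j) * norm x)"
    proof (rule sum_mono)
      fix j
      have "cmod (x$j) \<le> norm x" unfolding norm_vec_def by (rule member_le_L2_set) simp_all
      then show "cmod (L$i$j * x$j) \<le> cmod (L$i$j) * norm x"
        by (simp add: norm_mult mult_left_mono)
    qed
    finally show "cmod ((L *v x)$i) \<le> (\<Sum>j\<in>UNIV. cmod (L$i$j) * norm x)" .
  qed
  also have "\<dots> = m1 L * norm x" by (simp add: m1_def sum_distrib_right)
  finally show ?thesis .
qed

lemma m1_nonneg: "m1 L \<ge> 0" by (simp add: m1_def sum_nonneg)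

lemma m1_cmat_le: "m1 (cmat (E :: real^'n^'m)) \<le> real CARD('m) * real CARD('n) * norm E"
proof -
  have "m1 (cmat E) = (\<Sum>i\<in>UNIV. \<Sum>j\<in>UNIV. \<bar>E$i$j\<bar>)" by (simp add: m1_def cmat_def)
  also have "\<dots> \<le> (\<Sum>i\<in>(UNIV::'m set). \<Sum>j\<in>(UNIV::'n set). norm E)"
  proof (intro sum_mono)
    fix i j
    have "\<bar>E$i$j\<bar> \<le> norm (E$i)" by (rule component_le_norm_cart)
    also have "norm (E$i) \<le> norm E" unfolding norm_vec_def[of E] by (rule member_le_L2_set) simp_all
    finally show "\<bar>E$i$j\<bar> \<le> norm E" .
  qed
  also have "\<dots> = real CARD('m) * real CARD('n) * norm E" by simp
  finally show ?thesis .
qed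

lemma unit_cis: "cmod z = 1 \<Longrightarrow> \<exists>\<omega>\<in>{0..2*pi}. cis \<omega> = z"
proof -
  assume z: "cmod z = 1"
  then have z0: "z \<noteq> 0" by auto
  have zc: "cis (Arg z) = z" using cis_Arg[OF z0] z by (simp add: sgn_div_norm)
  show ?thesis
  proof (cases "Arg z \<ge> 0")
    case True
    then show ?thesis using Arg_le_pi[of z] zc by (intro bexI[of _ "Arg z"]) auto
  next
    case False
    have "cis (Arg z + 2*pi) = cis (Arg z) * cis (2*pi)" by (simp only: cis_mult)
    also have "\<dots> = z" using zc by simp
    finally show ?thesis using False Arg_bounded[of z] by (intro bexI[of _ "Arg z + 2*pi"]) auto
  qed
qed


lemma norm_smult_c: "norm (c *s (v::complex^'n)) = cmod c * norm v"
  unfolding norm_vec_def by (simp add: norm_mult L2_set_right_distrib)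

lemma mat_D_factor:
  fixes N :: "complex^'n^'n"
  assumes "u \<noteq> 0"
  shows "(\<chi> i j. (if i = j then 1 else 0) - u * N$i$j) = mat u ** (mat (1/u) - N)"
  using assms by (simp only: mat_mult_mat) (auto simp: vec_eq_iff mat_def right_diff_distrib)

lemma det_D_nz:
  fixes N :: "complex^'n^'n"
  assumes stab: "\<And>c. is_eigenvalue N c \<Longrightarrow> cmod c < 1" and w: "cmod w \<le> 1"
  shows "det (\<chi> i j. (if i = j then 1 else 0) - w * N$i$j) \<noteq> 0"
proof (cases "w = 0")
  case True
  have "(\<chi> i j. (if i = j then 1 else 0) - w * N$i$j) = (mat 1 :: complex^'n^'n)"
    using True by (simp add: vec_eq_iff mat_def)
  then show ?thesis by simp
next
  case False
  have "cmod (1/w) \<ge> 1" using w False by (simp add: norm_divide field_simps)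
  then have "\<not> is_eigenvalue N (1/w)" using stab by force
  then have "det (mat (1/w) - N) \<noteq> 0" unfolding is_eigenvalue_def eig_iff_det .
  then show ?thesis unfolding mat_D_factor[OF False] det_mul det_mat_scal using False by simp
qed

lemma MM:
  fixes N :: "complex^'n^'n" and L :: "complex^'n^'m"
  assumes stab: "\<And>c. is_eigenvalue N c \<Longrightarrow> cmod c < 1"
    and bnd: "\<And>z y. cmod z = 1 \<Longrightarrow> norm (L *v y) \<le> C * norm ((mat z - N) *v y)"
    and w: "cmod w \<le> 1" and C: "C \<ge> 0"
  shows "norm (L *v y) \<le> C * norm ((\<chi> i j. (if i = j then 1 else 0) - w * N$i$j) *v y)"
proof -
  define D where "D u = (\<chi> i j. (if i = j then 1 else 0) - u * N$i$j)" for u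
  have detD: "cmod u \<le> 1 \<Longrightarrow> det (D u) \<noteq> 0" for u
    unfolding D_def using det_D_nz[OF stab] by blast
  define x where "x = D w *v y"
  define g where "g u = (\<chi> k. det (\<chi> i j. if j = k then x$i else D u $i$j) / det (D u))" for u
  have gsol: "D u *v g u = x" if "det (D u) \<noteq> 0" for u
    using cramer[OF that] unfolding g_def by blast
  have yg: "y = g w"
    using cramer[OF detD[OF w], of y x] unfolding g_def x_def by blast
  define U where "U = {u. det (D u) \<noteq> 0}"
  have holdet: "(\<lambda>u. det (D u)) holomorphic_on UNIV"
    unfolding D_def by (rule holo_det) (auto intro!: holomorphic_intros)
  have holnum: "(\<lambda>u. det (\<chi> i j. if j = k then x$i else D u $i$j)) holomorphic_on UNIV" for k
  proof (rule holo_det)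
    fix i j
    show "(\<lambda>u. ((\<chi> i j. if j = k then x$i else D u $i$j) $ i) $ j) holomorphic_on UNIV"
      unfolding D_def by (cases "j = k") (auto intro!: holomorphic_intros)
  qed
  have openU: "open U"
    unfolding U_def
    by (rule open_Collect_neq) (auto intro: holomorphic_on_imp_continuous_on holdet)
  have cbU: "cball 0 1 \<subseteq> U" unfolding U_def using detD by auto
  have holg: "(\<lambda>u. g u $ k) holomorphic_on U" for k
    unfolding g_def vec_lambda_beta
    by (rule holomorphic_on_divide[OF holomorphic_on_subset[OF holnum] holomorphic_on_subset[OF holdet]])
       (auto simp: U_def)
  define a where "a = L *v g w"
  define h where "h u = cinner a (L *v g u)" for u
  have holh: "h holomorphic_on U"
    unfolding h_def cinner_def matrix_vector_mult_def vec_lambda_beta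
    by (intro holomorphic_intros holg)
  have front: "cmod (h u) \<le> norm a * (C * norm x)" if u: "u \<in> frontier (cball 0 1)" for u
  proof -
    have u1: "cmod u = 1" using u by (simp add: frontier_cball)
    then have u0: "u \<noteq> 0" by auto
    have dnz: "det (D u) \<noteq> 0" using detD u1 by simp
    have "x = D u *v g u" using gsol[OF dnz] by simp
    also have "\<dots> = u *s ((mat (1/u) - N) *v g u)"
      unfolding D_def mat_D_factor[OF u0] by (simp add: matrix_vector_mul_assoc[symmetric] mat_mult_vec)
    finally have "norm x = norm ((mat (1/u) - N) *v g u)" by (simp add: norm_smult_c u1)
    moreover have "norm (L *v g u) \<le> C * norm ((mat (1/u) - N) *v g u)"
      by (rule bnd) (simp add: norm_divide u1)
    ultimately have "norm (L *v g u) \<le> C * norm x" by simp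
    moreover have "cmod (h u) \<le> norm a * norm (L *v g u)" unfolding h_def by (rule norm_cinner)
    ultimately show ?thesis by (meson norm_ge_zero mult_left_mono order_trans)
  qed
  have "cmod (h w) \<le> norm a * (C * norm x)"
  proof (rule maximum_modulus_frontier[of h "cball 0 1"])
    show "h holomorphic_on interior (cball 0 1)"
    proof (rule holomorphic_on_subset[OF holh])
      show "interior (cball 0 1) \<subseteq> U" using cbU interior_subset by blast
    qed
    show "continuous_on (closure (cball 0 1)) h"
      using holh cbU openU
      by (auto intro: holomorphic_on_imp_continuous_on continuous_on_subset)
  qed (use front w in auto)
  moreover have "h w = of_real ((norm a)^2)" unfolding h_def a_def by (simp add: cinner_self)
  moreover have "cmod (of_real ((norm a)^2)) = (norm a)^2"
    by (simp only: norm_of_real abs_of_nonneg[OF zero_le_power2])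
  ultimately have "(norm a)^2 \<le> norm a * (C * norm x)" by metis
  then have "norm a \<le> C * norm x"
    using C by (cases "norm a = 0") (auto simp: power2_eq_square)
  then show ?thesis unfolding a_def yg[symmetric] x_def D_def .
qed


lemma matrix_inv_props:
  assumes "invertible (X :: 'a::semiring_1^'n^'n)"
  shows "X ** matrix_inv X = mat 1 \<and> matrix_inv X ** X = mat 1"
  using assms unfolding invertible_def matrix_inv_def by (rule someI_ex)

definition cnjm :: "complex^'n^'m \<Rightarrow> complex^'n^'m" where
  "cnjm X = (\<chi> i j. cnj (X$i$j))"

lemma cnjm_mult: "cnjm (X ** Y) = cnjm X ** cnjm Y"
  by (simp add: cnjm_def matrix_matrix_mult_def vec_eq_iff cnj_sum)

lemma cnjm_mat1: "cnjm (mat 1 :: complex^'n^'n) = mat 1"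
  by (simp add: cnjm_def mat_def vec_eq_iff)

lemma inv_cnjm:
  assumes "invertible (X :: complex^'n^'n)"
  shows "matrix_inv (cnjm X) = cnjm (matrix_inv X)"
proof -
  define Y where "Y = matrix_inv X"
  have XY: "X ** Y = mat 1" "Y ** X = mat 1" using matrix_inv_props[OF assms] Y_def by auto
  have c1: "cnjm X ** cnjm Y = mat 1" using XY(1) by (metis cnjm_mult cnjm_mat1)
  have c2: "cnjm Y ** cnjm X = mat 1" using XY(2) by (metis cnjm_mult cnjm_mat1)
  have inv: "invertible (cnjm X)" unfolding invertible_def using c1 c2 by blast
  define Z where "Z = matrix_inv (cnjm X)"
  have Z: "Z ** cnjm X = mat 1" using matrix_inv_props[OF inv] Z_def by auto
  have "Z = Z ** (cnjm X ** cnjm Y)" by (simp add: c1)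
  also have "\<dots> = (Z ** cnjm X) ** cnjm Y" by (simp add: matrix_mul_assoc)
  also have "\<dots> = cnjm Y" by (simp add: Z)
  finally show ?thesis unfolding Z_def Y_def .
qed

lemma transpose_cnjm: "transpose (cnjm Y) = adj Y"
  by (simp add: cnjm_def adj_def transpose_def vec_eq_iff)

lemma adj_adj: "adj (adj Y) = Y"
  by (simp add: adj_def vec_eq_iff)

lemma unif_bound:
  fixes N :: "complex^'n^'n"
  assumes stab: "\<And>c. is_eigenvalue N c \<Longrightarrow> cmod c < 1"
  shows "\<exists>c>0. \<forall>z x. cmod z = 1 \<longrightarrow> c * norm x \<le> norm ((mat z - N) *v x)"
proof -
  have eq: "(mat z - N) *v x = (\<chi> i. z * x$i - (\<Sum>j\<in>UNIV. N$i$j * x$j))" for z x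
    unfolding matrix_vector_mult_diff_rdistrib mat_mult_vec by (simp add: vec_eq_iff matrix_vector_mult_def)
  define F where "F p = norm ((mat (fst p) - N) *v snd p)" for p :: "complex \<times> (complex^'n)"
  have cont: "continuous_on UNIV F"
    unfolding F_def eq
    by (intro continuous_intros continuous_on_vec_lambda)
  define S where "S = sphere (0::complex) 1 \<times> sphere (0::complex^'n) 1"
  have cS: "compact S" unfolding S_def by (intro compact_Times compact_sphere)
  have neS: "S \<noteq> {}" unfolding S_def by simp
  obtain p0 where p0: "p0 \<in> S" and pmin: "\<And>p. p \<in> S \<Longrightarrow> F p0 \<le> F p"
    using continuous_attains_inf[OF cS neS continuous_on_subset[OF cont]] by blast
  have pos: "F p0 > 0"
  proof (rule ccontr)
    assume "\<not> F p0 > 0"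
    then have "(mat (fst p0) - N) *v snd p0 = 0" unfolding F_def by simp
    then have "N *v snd p0 = fst p0 *s snd p0"
      by (simp add: matrix_vector_mult_diff_rdistrib mat_mult_vec)
    moreover have "snd p0 \<noteq> 0" "cmod (fst p0) = 1" using p0 by (auto simp: S_def)
    ultimately have "is_eigenvalue N (fst p0)" "cmod (fst p0) = 1" unfolding is_eigenvalue_def by auto
    then show False using stab by force
  qed
  have "F p0 * norm x \<le> norm ((mat z - N) *v x)" if z: "cmod z = 1" for z x
  proof (cases "x = 0")
    case True then show ?thesis by simp
  next
    case False
    then have nx: "norm x > 0" by simp
    have "(z, (1 / norm x) *\<^sub>R x) \<in> S" unfolding S_def using z nx by simp
    then have "F p0 \<le> F (z, (1 / norm x) *\<^sub>R x)" by (rule pmin)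
    also have "\<dots> = norm ((mat z - N) *v x) / norm x"
      unfolding F_def by (simp add: mv_scaleR)
    finally show ?thesis using nx by (simp add: field_simps)
  qed
  then show ?thesis using pos by blast
qed


lemma J_lower:
  fixes A :: "real^'nx^'nx" and B :: "real^'nu^'nx" and Q :: "real^'nx^'nx" and R :: "real^'nu^'nu"
    and K :: "real^'nx^'nu"
  assumes stab: "\<And>c. is_eigenvalue (cmat (A - B ** K)) c \<Longrightarrow> cmod c < 1"
    and symQ: "transpose Q = Q" and symR: "transpose R = R"
    and q: "\<forall>a. q * (norm a)^2 \<le> a \<bullet> (Q *v a)" and r: "\<forall>b. r * (norm b)^2 \<le> b \<bullet> (R *v b)"
    and q0: "q \<ge> 0" and r0: "r \<ge> 0"
  shows "0 \<le> Jcost A B Q R K"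
    and "\<And>z x. cmod z = 1 \<Longrightarrow> q * (norm x)^2 + r * (norm (cmat K *v x))^2
           \<le> (Jcost A B Q R K)^2 * (norm ((mat z - cmat (A - B ** K)) *v x))^2"
proof -
  define N where "N = cmat (A - B ** K)"
  define W where "W = Q + transpose K ** R ** K"
  define Wc where "Wc = cmat W"
  have symW: "transpose W = W"
    unfolding W_def transpose_add matrix_transpose_mul transpose_transpose symQ symR
    by (simp add: matrix_mul_assoc)
  have adjWc: "adj Wc = Wc" by (simp add: Wc_def adj_cmat symW)
  have Wherm: "cinner a (Wc *v b) = cnj (cinner b (Wc *v a))" for a b
    by (metis adjWc cinner_adj cinner_cnj)
  have Wlow: "q * (norm x)^2 + r * (norm (cmat K *v x))^2 \<le> Re (cinner x (Wc *v x))" for x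
    unfolding Wc_def W_def by (rule W_lower[OF q r])
  obtain c where c: "c > 0" "\<And>z x. cmod z = 1 \<Longrightarrow> c * norm x \<le> norm ((mat z - N) *v x)"
    using unif_bound[OF stab] unfolding N_def by blast
  define M where "M \<omega> = mat (cis \<omega>) - N" for \<omega>
  have Mdef: "mat (cis \<omega>) - cmat A + cmat (B ** K) = M \<omega>" for \<omega>
    unfolding M_def N_def cmat_diff by (simp add: algebra_simps)
  have Mbar: "mat (cis (-\<omega>)) - cmat A + cmat (B ** K) = cnjm (M \<omega>)" for \<omega>
    unfolding M_def N_def cmat_diff
    by (simp add: vec_eq_iff cnjm_def cmat_def mat_def cis_cnj[symmetric])
  have invM: "invertible (M \<omega>)" for \<omega>
  proof -
    have "\<not> is_eigenvalue N (cis \<omega>)" using stab[folded N_def] by force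
    then show ?thesis unfolding M_def invertible_det_nz is_eigenvalue_def eig_iff_det .
  qed
  define Y where "Y \<omega> = matrix_inv (M \<omega>)" for \<omega>
  have MY: "M \<omega> ** Y \<omega> = mat 1" "Y \<omega> ** M \<omega> = mat 1" for \<omega>
    using matrix_inv_props[OF invM] Y_def by auto
  define H where "H \<omega> = transpose (matrix_inv (mat (cis (-\<omega>)) - cmat A + cmat (B ** K)))
      ** cmat (Q + transpose K ** R ** K) ** matrix_inv (mat (cis \<omega>) - cmat A + cmat (B ** K))" for \<omega>
  have Hform: "H \<omega> = adj (Y \<omega>) ** Wc ** Y \<omega>" for \<omega>
    unfolding H_def Mbar unfolding Mdef inv_cnjm[OF invM] transpose_cnjm Y_def Wc_def W_def ..
  have Hq: "cinner u (H \<omega> *v v) = cinner (Y \<omega> *v u) (Wc *v (Y \<omega> *v v))" for \<omega> u v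
  proof -
    have "H \<omega> *v v = adj (Y \<omega>) *v (Wc *v (Y \<omega> *v v))"
      unfolding Hform by (simp add: matrix_vector_mul_assoc matrix_mul_assoc)
    then show ?thesis by (simp add: cinner_adj adj_adj)
  qed
  have Hherm: "cinner u (H \<omega> *v v) = cnj (cinner v (H \<omega> *v u))" for \<omega> u v
    unfolding Hq by (rule Wherm)
  have Jdef: "Jcost A B Q R K = (SUP \<omega>\<in>{0..2*pi}. sqrt (lambda_max (H \<omega>)))"
    unfolding Jcost_def H_def ..
  have Yb: "c * norm (Y \<omega> *v v) \<le> norm v" for \<omega> v
  proof -
    have "c * norm (Y \<omega> *v v) \<le> norm ((mat (cis \<omega>) - N) *v (Y \<omega> *v v))"
      by (rule c(2)) simp
    also have "(mat (cis \<omega>) - N) *v (Y \<omega> *v v) = v"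
      using MY(1)[of \<omega>] unfolding M_def by (simp add: matrix_vector_mul_assoc)
    finally show ?thesis .
  qed
  have lam_nonneg: "0 \<le> lambda_max (H \<omega>)" for \<omega>
  proof -
    obtain v where v: "norm v = 1" "lambda_max (H \<omega>) = Re (cinner v (H \<omega> *v v))"
      using herm_lmax(2)[OF Hherm] by blast
    have "0 \<le> q * (norm (Y \<omega> *v v))^2 + r * (norm (cmat K *v (Y \<omega> *v v)))^2"
      using q0 r0 by simp
    also have "\<dots> \<le> Re (cinner (Y \<omega> *v v) (Wc *v (Y \<omega> *v v)))" by (rule Wlow)
    finally show ?thesis unfolding v(2) Hq .
  qed
  have lam_up: "lambda_max (H \<omega>) \<le> m1 Wc / c^2" for \<omega>
  proof -
    obtain v where v: "norm v = 1" "lambda_max (H \<omega>) = Re (cinner v (H \<omega> *v v))"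
      using herm_lmax(2)[OF Hherm] by blast
    define y where "y = Y \<omega> *v v"
    have ny: "norm y \<le> 1 / c" using Yb[of \<omega> v] v(1) c(1) unfolding y_def by (simp add: field_simps)
    have "lambda_max (H \<omega>) = Re (cinner y (Wc *v y))" unfolding v(2) Hq y_def ..
    also have "\<dots> \<le> cmod (cinner y (Wc *v y))" by (rule complex_Re_le_cmod)
    also have "\<dots> \<le> norm y * norm (Wc *v y)" by (rule norm_cinner)
    also have "\<dots> \<le> norm y * (m1 Wc * norm y)" by (rule mult_left_mono[OF norm_mv_le norm_ge_zero])
    also have "\<dots> = m1 Wc * (norm y)^2" by (simp add: power2_eq_square)
    also have "\<dots> \<le> m1 Wc * (1/c)^2"
      by (rule mult_left_mono[OF power_mono[OF ny norm_ge_zero] m1_nonneg])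
    finally show ?thesis by (simp add: power_one_over)
  qed
  have bdd: "bdd_above ((\<lambda>\<omega>. sqrt (lambda_max (H \<omega>))) ` {0..2*pi})"
    by (rule bdd_aboveI2[of _ _ "sqrt (m1 Wc / c^2)"]) (simp add: lam_up)
  have leJ: "sqrt (lambda_max (H \<omega>)) \<le> Jcost A B Q R K" if "\<omega> \<in> {0..2*pi}" for \<omega>
    unfolding Jdef by (rule cSUP_upper[OF that bdd])
  show J0: "0 \<le> Jcost A B Q R K"
  proof -
    have "(0::real) \<in> {0..2*pi}" by simp
    then have "sqrt (lambda_max (H 0)) \<le> Jcost A B Q R K" by (rule leJ)
    moreover have "0 \<le> sqrt (lambda_max (H 0))" using lam_nonneg[of 0] by simp
    ultimately show ?thesis by linarith
  qed
  fix z x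
  assume z: "cmod z = 1"
  obtain \<omega> where om: "\<omega> \<in> {0..2*pi}" "cis \<omega> = z" using unit_cis[OF z] by blast
  define v where "v = M \<omega> *v x"
  have Yv: "Y \<omega> *v v = x" unfolding v_def using MY(2)[of \<omega>] by (simp add: matrix_vector_mul_assoc)
  have lamJ: "lambda_max (H \<omega>) \<le> (Jcost A B Q R K)^2"
  proof -
    have "sqrt (lambda_max (H \<omega>)) \<le> Jcost A B Q R K" by (rule leJ[OF om(1)])
    then have "(sqrt (lambda_max (H \<omega>)))^2 \<le> (Jcost A B Q R K)^2"
      by (rule power_mono) (simp add: lam_nonneg)
    then show ?thesis using lam_nonneg[of \<omega>] by simp
  qed
  have "q * (norm x)^2 + r * (norm (cmat K *v x))^2 \<le> Re (cinner x (Wc *v x))" by (rule Wlow)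
  also have "\<dots> = Re (cinner v (H \<omega> *v v))" unfolding Hq Yv ..
  also have "\<dots> \<le> lambda_max (H \<omega>) * (norm v)^2" by (rule herm_lmax(1)[OF Hherm])
  also have "\<dots> \<le> (Jcost A B Q R K)^2 * (norm v)^2" by (rule mult_right_mono[OF lamJ]) simp
  also have "v = (mat z - cmat (A - B ** K)) *v x" unfolding v_def M_def N_def om(2) ..
  finally show "q * (norm x)^2 + r * (norm (cmat K *v x))^2
           \<le> (Jcost A B Q R K)^2 * (norm ((mat z - cmat (A - B ** K)) *v x))^2" .
qed


lemma sqrt_ineq:
  fixes a b x y :: real
  assumes "a * x^2 \<le> b^2 * y^2" "a > 0" "b \<ge> 0" "x \<ge> 0" "y \<ge> 0"
  shows "x \<le> (b / sqrt a) * y"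
proof -
  have "(sqrt a * x)^2 \<le> (b * y)^2" using assms by (simp add: power_mult_distrib)
  then have "sqrt a * x \<le> b * y" by (rule power2_le_imp_le) (use assms in simp)
  then show ?thesis using assms(2) by (simp add: field_simps)
qed

lemma D0_eq: "(\<chi> i j. (if i = j then 1 else 0) - 0 * N$i$j) = (mat 1 :: complex^'n^'n)"
  by (simp add: vec_eq_iff mat_def)

lemma norm_axis_c: "norm (axis j (1::complex) :: complex^'n) = 1"
proof -
  have "(\<Sum>i\<in>UNIV. (cmod (axis j (1::complex) $ i))^2) = (\<Sum>i\<in>(UNIV::'n set). if i = j then 1 else 0)"
    by (rule sum.cong) (auto simp: axis_def)
  then have "(norm (axis j (1::complex) :: complex^'n))^2 = 1" by (simp add: normsq_vec)
  then show ?thesis by (simp add: power2_eq_1_iff)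
qed

lemma norm_le_entries: "norm (K :: real^'n^'m) \<le> (\<Sum>i\<in>UNIV. \<Sum>j\<in>UNIV. \<bar>K$i$j\<bar>)"
proof -
  have "norm K \<le> (\<Sum>i\<in>UNIV. norm (K$i))" unfolding norm_vec_def[of K] by (rule L2_set_le_sum) simp
  also have "\<dots> \<le> (\<Sum>i\<in>UNIV. \<Sum>j\<in>UNIV. \<bar>K$i$j\<bar>)" by (intro sum_mono norm_le_l1_cart)
  finally show ?thesis .
qed

context
  fixes A :: "real^'nx^'nx" and B :: "real^'nu^'nx" and Q :: "real^'nx^'nx" and R :: "real^'nu^'nu"
    and q r :: real
  assumes symQ: "transpose Q = Q" and symR: "transpose R = R"
    and q: "\<forall>a. q * (norm a)^2 \<le> a \<bullet> (Q *v a)" and r: "\<forall>b. r * (norm b)^2 \<le> b \<bullet> (R *v b)"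
    and q0: "q > 0" and r0: "r > 0"
begin

lemma stab_of: "K \<in> stab_set A B \<Longrightarrow> is_eigenvalue (cmat (A - B ** K)) c \<Longrightarrow> cmod c < 1"
  unfolding stab_set_def using spec_rad_lt1 by blast

lemma norm_case_bound:
  fixes K :: "real^'nx^'nu"
  assumes KS: "K \<in> stab_set A B"
  shows "norm K \<le> real CARD('nu) * real CARD('nx) * (Jcost A B Q R K / sqrt r)"
proof -
  have st: "\<And>c. is_eigenvalue (cmat (A - B ** K)) c \<Longrightarrow> cmod c < 1" by (rule stab_of[OF KS])
  have JL1: "0 \<le> Jcost A B Q R K"
    apply (rule J_lower(1)) apply (fact st) apply (fact symQ) apply (fact symR) apply (fact q) apply (fact r)
    using q0 r0 by auto
  have JL2: "q * (norm x)^2 + r * (norm (cmat K *v x))^2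
           \<le> (Jcost A B Q R K)^2 * (norm ((mat z - cmat (A - B ** K)) *v x))^2" if "cmod z = 1" for z x
    apply (rule J_lower(2)) apply (fact st) apply (fact symQ) apply (fact symR) apply (fact q) apply (fact r)
    using q0 r0 that by auto
  define C where "C = Jcost A B Q R K / sqrt r"
  have C0: "C \<ge> 0" unfolding C_def using JL1 r0 by (simp add: divide_nonneg_nonneg)
  have bnd: "norm (cmat K *v y) \<le> C * norm ((mat z - cmat (A - B ** K)) *v y)" if z: "cmod z = 1" for z y
  proof -
    have "r * (norm (cmat K *v y))^2 \<le> (Jcost A B Q R K)^2 * (norm ((mat z - cmat (A - B ** K)) *v y))^2"
      using JL2[OF z, of y] q0 by (smt (verit) mult_nonneg_nonneg zero_le_power2)
    then show ?thesis unfolding C_def by (rule sqrt_ineq) (use r0 JL1 in auto)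
  qed
  have Kb: "norm (cmat K *v y) \<le> C * norm y" for y
    using MM[OF st bnd, of 0 y, unfolded D0_eq] C0 by simp
  have ent: "\<bar>K$i$j\<bar> \<le> C" for i j
  proof -
    have "(cmat K *v axis j 1) $ i = complex_of_real (K$i$j)"
      by (simp add: cmat_def matrix_vector_mult_def axis_def if_distrib[of "\<lambda>x. _ * x"] cong: if_cong)
    then have "\<bar>K$i$j\<bar> = cmod ((cmat K *v axis j 1) $ i)" by simp
    also have "\<dots> \<le> norm (cmat K *v axis j 1)" unfolding norm_vec_def by (rule member_le_L2_set) simp_all
    also have "\<dots> \<le> C" using Kb[of "axis j 1"] by (simp add: norm_axis_c)
    finally show ?thesis .
  qed
  have "norm K \<le> (\<Sum>i\<in>UNIV. \<Sum>j\<in>UNIV. \<bar>K$i$j\<bar>)" by (rule norm_le_entries)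
  also have "\<dots> \<le> (\<Sum>i\<in>(UNIV::'nu set). \<Sum>j\<in>(UNIV::'nx set). C)" by (intro sum_mono ent)
  also have "\<dots> = real CARD('nu) * real CARD('nx) * C" by simp
  finally show ?thesis unfolding C_def .
qed

lemma ball_case:
  fixes K :: "real^'nx^'nu"
  assumes KS: "K \<in> stab_set A B" and JC: "Jcost A B Q R K \<le> C" and C0: "C > 0"
    and d: "norm (K' - K) < 1 / (2 * (C / sqrt q) * (m1 (cmat B) * real CARD('nu) * real CARD('nx) + 1))"
  shows "K' \<in> stab_set A B"
proof -
  have st: "\<And>c. is_eigenvalue (cmat (A - B ** K)) c \<Longrightarrow> cmod c < 1" by (rule stab_of[OF KS])
  have JL1: "0 \<le> Jcost A B Q R K"
    apply (rule J_lower(1)) apply (fact st) apply (fact symQ) apply (fact symR) apply (fact q) apply (fact r)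
    using q0 r0 by auto
  have JL2: "q * (norm x)^2 + r * (norm (cmat K *v x))^2
           \<le> (Jcost A B Q R K)^2 * (norm ((mat z - cmat (A - B ** K)) *v x))^2" if "cmod z = 1" for z x
    apply (rule J_lower(2)) apply (fact st) apply (fact symQ) apply (fact symR) apply (fact q) apply (fact r)
    using q0 r0 that by auto
  define N where "N = cmat (A - B ** K)"
  define C' where "C' = C / sqrt q"
  have C'0: "C' > 0" unfolding C'_def using C0 q0 by simp
  have bnd: "norm (mat 1 *v y) \<le> C' * norm ((mat z - N) *v y)" if z: "cmod z = 1" for z y
  proof -
    have JJ: "(Jcost A B Q R K)^2 \<le> C^2" using JL1 JC by (simp add: power_mono)
    have "q * (norm y)^2 \<le> (Jcost A B Q R K)^2 * (norm ((mat z - N) *v y))^2"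
      using JL2[OF z, of y] r0 unfolding N_def by (smt (verit) mult_nonneg_nonneg zero_le_power2)
    also have "\<dots> \<le> C^2 * (norm ((mat z - N) *v y))^2" by (rule mult_right_mono[OF JJ]) simp
    finally have "norm y \<le> C' * norm ((mat z - N) *v y)"
      unfolding C'_def by (rule sqrt_ineq) (use q0 C0 in auto)
    then show ?thesis by simp
  qed
  have outb: "norm y \<le> C' * norm ((mat z - N) *v y)" if z: "cmod z \<ge> 1" for z y
  proof -
    have z0: "z \<noteq> 0" using z by auto
    have w: "cmod (1/z) \<le> 1" using z by (auto simp: norm_divide divide_le_eq)
    have "norm (mat 1 *v y) \<le> C' * norm ((\<chi> i j. (if i = j then 1 else 0) - (1/z) * N$i$j) *v y)"
      by (rule MM[OF st[folded N_def] bnd w]) (use C'0 in auto)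
    also have "(\<chi> i j. (if i = j then 1 else 0) - (1/z) * N$i$j) = mat (1/z) ** (mat z - N)"
      using mat_D_factor[of "1/z" N] z0 by simp
    also have "norm ((mat (1/z) ** (mat z - N)) *v y) = cmod (1/z) * norm ((mat z - N) *v y)"
      by (simp add: matrix_vector_mul_assoc[symmetric] mat_mult_vec norm_smult_c)
    also have "C' * (cmod (1/z) * norm ((mat z - N) *v y)) \<le> C' * norm ((mat z - N) *v y)"
      using C'0 w by (simp add: mult_left_le_one_le)
    finally show ?thesis by simp
  qed
  define E where "E = K' - K"
  define \<beta> where "\<beta> = m1 (cmat B) * real CARD('nu) * real CARD('nx)"
  have \<beta>0: "\<beta> \<ge> 0" unfolding \<beta>_def using m1_nonneg[of "cmat B"] by simp
  have Eb: "norm (cmat (B ** E) *v y) \<le> \<beta> * norm E * norm y" for y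
  proof -
    have "cmat (B ** E) *v y = cmat B *v (cmat E *v y)" by (simp add: cmat_mult matrix_vector_mul_assoc)
    then have "norm (cmat (B ** E) *v y) \<le> m1 (cmat B) * norm (cmat E *v y)" using norm_mv_le by metis
    also have "\<dots> \<le> m1 (cmat B) * (m1 (cmat E) * norm y)"
      by (rule mult_left_mono[OF norm_mv_le m1_nonneg])
    also have "\<dots> \<le> m1 (cmat B) * ((real CARD('nu) * real CARD('nx) * norm E) * norm y)"
      by (intro mult_left_mono mult_right_mono m1_cmat_le m1_nonneg norm_ge_zero)
    finally show ?thesis unfolding \<beta>_def by (simp add: mult_ac)
  qed
  have \<beta>E: "\<beta> * norm E \<le> 1 / (2 * C')"
  proof -
    have p: "2 * C' * (\<beta> + 1) > 0" using C'0 \<beta>0 by (intro mult_pos_pos) auto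
    have d': "norm E < 1 / (2 * C' * (\<beta> + 1))" using d unfolding E_def C'_def \<beta>_def .
    then have d2: "norm E * (2 * C' * (\<beta> + 1)) < 1" using p by (simp add: less_divide_eq)
    have "\<beta> * norm E * (2 * C') \<le> (\<beta> + 1) * norm E * (2 * C')"
      using C'0 by (intro mult_right_mono) (auto simp: algebra_simps)
    also have "\<dots> = norm E * (2 * C' * (\<beta> + 1))" by (simp add: mult_ac)
    finally have "\<beta> * norm E * (2 * C') \<le> 1" using d2 by linarith
    then show ?thesis using C'0 by (simp add: le_divide_eq)
  qed
  have BE: "B ** K' = B ** K + B ** E" unfolding E_def matrix_add_ldistrib[symmetric] by simp
  have N': "cmat (A - B ** K') = N - cmat (B ** E)"
    unfolding N_def BE by (simp add: cmat_diff cmat_add algebra_simps)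
  have "cmod c < 1" if ev: "is_eigenvalue (cmat (A - B ** K')) c" for c
  proof (rule ccontr)
    assume "\<not> cmod c < 1"
    then have c1: "cmod c \<ge> 1" by simp
    obtain y where y: "y \<noteq> 0" "cmat (A - B ** K') *v y = c *s y" using ev unfolding is_eigenvalue_def by blast
    have "(mat c - N) *v y = - (cmat (B ** E) *v y)"
    proof -
      have "(mat c - N) *v y = c *s y - N *v y" by (simp add: matrix_vector_mult_diff_rdistrib mat_mult_vec)
      also have "c *s y = N *v y - cmat (B ** E) *v y" using y(2) unfolding N' by (simp add: matrix_vector_mult_diff_rdistrib)
      finally show ?thesis by simp
    qed
    then have "norm y \<le> C' * norm (cmat (B ** E) *v y)" using outb[OF c1, of y] by simp
    also have "\<dots> \<le> C' * (\<beta> * norm E * norm y)" by (rule mult_left_mono[OF Eb]) (use C'0 in simp)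
    also have "\<dots> \<le> C' * (1 / (2 * C') * norm y)"
      by (intro mult_left_mono mult_right_mono \<beta>E) (use C'0 in auto)
    also have "\<dots> = norm y / 2" using C'0 by simp
    finally show False using y(1) by simp
  qed
  then show ?thesis unfolding stab_set_def using spec_rad_lt1 by blast
qed

end


theorem lemma1:
  fixes A :: "real^'nx^'nx" and B :: "real^'nu^'nx"
    and Q :: "real^'nx^'nx" and R :: "real^'nu^'nu"
    and K :: "nat \<Rightarrow> real^'nx^'nu"
  assumes "sym_pd Q" and "sym_pd R" and "stabilizable A B"
    and "\<forall>l. K l \<in> stab_set A B"
    and "filterlim (\<lambda>l. norm (K l)) at_top sequentially
         \<or> (\<exists>K0 \<in> frontier (stab_set A B). K \<longlonglongrightarrow> K0)"
  shows "filterlim (\<lambda>l. Jcost A B Q R (K l)) at_top sequentially"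
proof -
  have symQ: "transpose Q = Q" using assms(1) unfolding sym_pd_def by blast
  have symR: "transpose R = R" using assms(2) unfolding sym_pd_def by blast
  obtain q where q0: "q > 0" and q: "\<forall>a. q * (norm a)^2 \<le> a \<bullet> (Q *v a)"
    using pd_const[OF assms(1)] by blast
  obtain r where r0: "r > 0" and r: "\<forall>b. r * (norm b)^2 \<le> b \<bullet> (R *v b)"
    using pd_const[OF assms(2)] by blast
  have KS: "K l \<in> stab_set A B" for l using assms(4) by blast
  from assms(5) show ?thesis
  proof
    assume h: "filterlim (\<lambda>l. norm (K l)) at_top sequentially"
    define \<kappa> where "\<kappa> = real CARD('nu) * real CARD('nx)"
    have \<kappa>0: "\<kappa> > 0" unfolding \<kappa>_def by simp
    have b: "norm (K l) \<le> \<kappa> * (Jcost A B Q R (K l) / sqrt r)" for l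
      unfolding \<kappa>_def by (rule norm_case_bound[OF symQ symR q r q0 r0 KS])
    show ?thesis unfolding filterlim_at_top
    proof
      fix Z :: real
      from h have "eventually (\<lambda>l. Z * \<kappa> / sqrt r \<le> norm (K l)) sequentially"
        by (simp add: filterlim_at_top)
      then show "eventually (\<lambda>l. Z \<le> Jcost A B Q R (K l)) sequentially"
      proof (rule eventually_mono)
        fix l
        assume "Z * \<kappa> / sqrt r \<le> norm (K l)"
        with b[of l] have "Z * \<kappa> / sqrt r \<le> (Jcost A B Q R (K l) * \<kappa>) / sqrt r" by (simp add: mult_ac)
        then have "Z * \<kappa> \<le> Jcost A B Q R (K l) * \<kappa>" using r0 by (simp add: divide_le_cancel)
        then show "Z \<le> Jcost A B Q R (K l)" using \<kappa>0 by (rule mult_right_le_imp_le)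
      qed
    qed
  next
    assume "\<exists>K0 \<in> frontier (stab_set A B). K \<longlonglongrightarrow> K0"
    then obtain K0 where fr: "K0 \<in> frontier (stab_set A B)" and lim: "K \<longlonglongrightarrow> K0" by blast
    show ?thesis unfolding filterlim_at_top
    proof (rule ccontr)
      assume "\<not> (\<forall>Z. eventually (\<lambda>l. Z \<le> Jcost A B Q R (K l)) sequentially)"
      then obtain Z where nev: "\<not> eventually (\<lambda>l. Z \<le> Jcost A B Q R (K l)) sequentially" by blast
      define C where "C = max Z 1"
      have C0: "C > 0" unfolding C_def by simp
      define \<delta> where "\<delta> = 1 / (2 * (C / sqrt q) * (m1 (cmat B) * real CARD('nu) * real CARD('nx) + 1))"
      have \<delta>0: "\<delta> > 0"
      proof -
        have "m1 (cmat B) * real CARD('nu) * real CARD('nx) \<ge> 0" using m1_nonneg[of "cmat B"] by simp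
        then show ?thesis unfolding \<delta>_def using C0 q0 by (simp add: add_nonneg_pos)
      qed
      obtain N1 where N1: "\<And>n. n \<ge> N1 \<Longrightarrow> norm (K n - K0) < \<delta> / 2"
        using lim \<delta>0 unfolding LIMSEQ_iff by (metis half_gt_zero)
      obtain n where n: "n \<ge> N1" "\<not> Z \<le> Jcost A B Q R (K n)"
        using nev unfolding eventually_sequentially by blast
      have JC: "Jcost A B Q R (K n) \<le> C" using n(2) unfolding C_def by simp
      have "ball K0 (\<delta> / 2) \<subseteq> stab_set A B"
      proof
        fix K' assume "K' \<in> ball K0 (\<delta> / 2)"
        then have "norm (K' - K0) < \<delta> / 2" by (simp add: dist_norm norm_minus_commute)
        moreover have "norm (K0 - K n) < \<delta> / 2" using N1[OF n(1)] by (simp add: norm_minus_commute)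
        moreover have "norm (K' - K n) \<le> norm (K' - K0) + norm (K0 - K n)"
          using norm_triangle_ineq[of "K' - K0" "K0 - K n"] by simp
        ultimately have "norm (K' - K n) < \<delta>" by linarith
        then show "K' \<in> stab_set A B"
          unfolding \<delta>_def by (rule ball_case[OF symQ symR q r q0 r0 KS JC C0])
      qed
      then have "K0 \<in> interior (stab_set A B)"
        unfolding mem_interior using \<delta>0 by (intro exI[of _ "\<delta> / 2"]) auto
      then show False using fr unfolding frontier_def by blast
    qed
  qed
qed


end
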